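(* Let $F$ be the cdf of a continuous nonnegative random variable with unbounded support $[0,\infty)$, density $f$ and reversed hazard rate $\tilde h=f/F$. Let $\sigma_1,\sigma_2\geq0$, $\lambda_1,\lambda_2>0$, $r_1,r_2\geq0$, and let $n_1,n_2,n_1^*,n_2^*$ be positive integers with $n_1r_1+n_2r_2=1$ and $n_1^*r_1+n_2^*r_2=1$; put $n=n_1+n_2$, $n^*=n_1^*+n_2^*$. Let $U_n$ and $U_{n^*}$ be random variables with cdfs $$F_{U_n}(x)=n_1r_1F\!\left(\tfrac{x-\sigma_1}{\lambda_1}\right)I(x>\sigma_1)+n_2r_2F\!\left(\tfrac{x-\sigma_2}{\lambda_2}\right)I(x>\sigma_2),$$ $$F_{U_{n^*}}(x)=n_1^*r_1F\!\left(\tfrac{x-\sigma_1}{\lambda_1}\right)I(x>\sigma_1)+n_2^*r_2F\!\left(\tfrac{x-\sigma_2}{\lambda_2}\right)I(x>\sigma_2).$$ Suppose either that $F$ is DPRFR and $(\lambda_1,\lambda_2),(\sigma_1,\sigma_2)\in\mathcal{D}_2^+$, or that $F$ is IRFR and $(\lambda_1,\lambda_2),(\sigma_1,\sigma_2)\in\mathcal{E}_2^+$. If $n_1n_2^*\geq n_1^*n_2$, then $U_n\geq_{rh}U_{n^*}$.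
   Context: $I(x>\sigma)$ is $1$ if $x>\sigma$ and $0$ otherwise. $\mathcal{D}_2^+=\{(u_1,u_2):u_1\geq u_2>0\}$, $\mathcal{E}_2^+=\{(u_1,u_2):0<u_1\leq u_2\}$. $F$ is DPRFR (decreasing proportional reversed failure rate) if $x\tilde h(x)$ is decreasing in $x>0$; $F$ is IRFR if $\tilde h(x)$ is increasing in $x>0$. $X\geq_{rh}Y$ means the reversed hazard rate of $X$ is at least that of $Y$ at every $x\geq0$ (equivalently $F_X(x)/F_Y(x)$ is increasing). *)

theory Defs
  imports "HOL-Analysis.Analysis"
begin

definition Ind_gt :: "real \<Rightarrow> real \<Rightarrow> real" where
  "Ind_gt s x = (if x > s then 1 else 0)"

definition rev_hazard :: "(real \<Rightarrow> real) \<Rightarrow> (real \<Rightarrow> real) \<Rightarrow> real \<Rightarrow> real" where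
  "rev_hazard f F x = f x / F x"

definition DPRFR :: "(real \<Rightarrow> real) \<Rightarrow> (real \<Rightarrow> real) \<Rightarrow> bool" where
  "DPRFR f F \<longleftrightarrow> (\<forall>x y. 0 < x \<and> x \<le> y \<longrightarrow> y * rev_hazard f F y \<le> x * rev_hazard f F x)"

definition IRFR :: "(real \<Rightarrow> real) \<Rightarrow> (real \<Rightarrow> real) \<Rightarrow> bool" where
  "IRFR f F \<longleftrightarrow> (\<forall>x y. 0 < x \<and> x \<le> y \<longrightarrow> rev_hazard f F x \<le> rev_hazard f F y)"

definition D2plus :: "(real \<times> real) set" where
  "D2plus = {(u1, u2). u1 \<ge> u2 \<and> u2 > 0}"

definition E2plus :: "(real \<times> real) set" where
  "E2plus = {(u1, u2). 0 < u1 \<and> u1 \<le> u2}"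

text \<open>Reversed hazard rate order between cdfs: F_X / F_Y increasing,
  written without division (F_X(u) F_Y(v) \<le> F_X(v) F_Y(u) for u \<le> v).\<close>
definition rh_ge :: "(real \<Rightarrow> real) \<Rightarrow> (real \<Rightarrow> real) \<Rightarrow> bool" where
  "rh_ge FX FY \<longleftrightarrow> (\<forall>u v. u \<le> v \<longrightarrow> FX u * FY v \<le> FX v * FY u)"

definition cdf_U :: "(real \<Rightarrow> real) \<Rightarrow> nat \<Rightarrow> nat \<Rightarrow> real \<Rightarrow> real \<Rightarrow> real \<Rightarrow> real
    \<Rightarrow> real \<Rightarrow> real \<Rightarrow> real \<Rightarrow> real" where
  "cdf_U F m1 m2 r1 r2 s1 s2 l1 l2 x =
     real m1 * r1 * F ((x - s1) / l1) * Ind_gt s1 x + real m2 * r2 * F ((x - s2) / l2) * Ind_gt s2 x"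

end

theory Submission
  imports Defs
begin

lemma irfr_impossible:
  fixes F f :: "real \<Rightarrow> real"
  assumes F_cont: "continuous_on UNIV F"
    and F_supp: "\<And>x. x > 0 \<Longrightarrow> 0 < F x \<and> F x < 1"
    and F_lim: "(F \<longlongrightarrow> 1) at_top"
    and f_nonneg: "\<And>x. f x \<ge> 0"
    and f_dens: "\<And>x. x > 0 \<Longrightarrow> (F has_real_derivative f x) (at x)"
    and irfr: "IRFR f F"
  shows False
proof -
  have "\<exists>x0>0. f x0 \<noteq> 0"
  proof (rule ccontr)
    assume "\<not> ?thesis"
    hence z: "\<And>x. x > 0 \<Longrightarrow> f x = 0" by auto
    have eq: "\<And>y. y \<ge> 1 \<Longrightarrow> F y = F 1"
    proof -
      fix y :: real assume "y \<ge> 1"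
      show "F y = F 1"
      proof (cases "y = 1")
        case False
        with \<open>y \<ge> 1\<close> have "1 < y" by auto
        show ?thesis
          apply (rule DERIV_isconst2[OF \<open>1 < y\<close>])
          using continuous_on_subset[OF F_cont] apply blast
          subgoal for x using f_dens[of x] z[of x] by simp
          using \<open>y \<ge> 1\<close> by simp_all
      qed simp
    qed
    have ev: "eventually (\<lambda>y. F y = F 1) at_top"
      using eventually_ge_at_top[of "1::real"] by (rule eventually_mono) (rule eq)
    have "((\<lambda>y::real. F 1) \<longlongrightarrow> 1) at_top" using F_lim unfolding tendsto_cong[OF ev] .
    hence "F 1 = 1" by (simp add: tendsto_const_iff)
    with F_supp[of 1] show False by simp
  qed
  then obtain x0 where x0: "x0 > 0" "f x0 \<noteq> 0" by auto
  define c where "c = rev_hazard f F x0"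
  have Fx0: "0 < F x0" "F x0 < 1" using F_supp x0 by auto
  have cpos: "c > 0" using f_nonneg[of x0] x0 Fx0 unfolding c_def rev_hazard_def by auto
  define g where "g y = ln (F y) - c * y" for y
  define Y where "Y = x0 + (1 - ln (F x0)) / c"
  have lnneg: "ln (F x0) < 0" using Fx0 by simp
  have Yx0: "x0 < Y" unfolding Y_def using cpos lnneg by auto
  have dg: "(g has_real_derivative (f y / F y - c)) (at y)" if "y > 0" for y
    unfolding g_def using F_supp[OF that] f_dens[OF that]
    by (auto intro!: derivative_eq_intros simp: field_simps)
  have "g x0 \<le> g Y"
  proof (rule DERIV_nonneg_imp_increasing_open[OF less_imp_le[OF Yx0]])
    fix y assume "x0 < y" "y < Y"
    hence "c \<le> rev_hazard f F y" using irfr x0 unfolding IRFR_def c_def by auto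
    thus "\<exists>d. (g has_real_derivative d) (at y) \<and> d \<ge> 0"
      using dg[of y] \<open>x0 < y\<close> x0 unfolding rev_hazard_def by (intro exI[of _ "f y / F y - c"]) auto
  next
    show "continuous_on {x0..Y} g"
      apply (rule continuous_at_imp_continuous_on)
      using dg x0 by (meson DERIV_isCont atLeastAtMost_iff less_le_trans)
  qed
  hence "ln (F x0) - c * x0 \<le> ln (F Y) - c * Y" unfolding g_def .
  moreover have "c * Y = c * x0 + 1 - ln (F x0)" unfolding Y_def using cpos by (simp add: field_simps)
  ultimately have "ln (F Y) \<ge> 1" by linarith
  moreover have "ln (F Y) < 0" using F_supp[of Y] Yx0 x0 by simp
  ultimately show False by linarith
qed


lemma dln:
  fixes F f :: "real \<Rightarrow> real" and s l x :: real
  assumes F_supp: "\<And>x. x > 0 \<Longrightarrow> 0 < F x \<and> F x < 1"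
    and f_dens: "\<And>x. x > 0 \<Longrightarrow> (F has_real_derivative f x) (at x)"
    and "l > 0" "x > s"
  shows "((\<lambda>x. ln (F ((x-s)/l))) has_real_derivative (f ((x-s)/l) / l / F ((x-s)/l))) (at x)"
proof -
  have tp: "(x-s)/l > 0" using assms by simp
  have d1: "((\<lambda>x. (x-s)/l) has_real_derivative 1/l) (at x)"
    using assms(3) by (auto intro!: derivative_eq_intros)
  have d2: "((\<lambda>x. F ((x-s)/l)) has_real_derivative f ((x-s)/l) * (1/l)) (at x)"
    by (rule DERIV_chain2[OF f_dens[OF tp] d1])
  have d3: "((\<lambda>x. ln (F ((x-s)/l))) has_real_derivative (1 / F ((x-s)/l)) * (f ((x-s)/l) * (1/l))) (at x)"
    by (rule DERIV_chain2[OF DERIV_ln_divide d2]) (use F_supp[OF tp] in simp)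
  thus ?thesis by (simp add: divide_inverse mult_ac)
qed

lemma ratio_mono:
  fixes F f :: "real \<Rightarrow> real"
  assumes F_zero: "\<And>x. x \<le> 0 \<Longrightarrow> F x = 0"
    and F_supp: "\<And>x. x > 0 \<Longrightarrow> 0 < F x \<and> F x < 1"
    and f_nonneg: "\<And>x. f x \<ge> 0"
    and f_dens: "\<And>x. x > 0 \<Longrightarrow> (F has_real_derivative f x) (at x)"
    and dp: "DPRFR f F"
    and l: "l1 \<ge> l2" "l2 > 0" and s: "s1 \<ge> s2" "s2 \<ge> 0"
    and uv: "u \<le> v"
  shows "F ((u-s1)/l1) * F ((v-s2)/l2) \<le> F ((v-s1)/l1) * F ((u-s2)/l2)"
proof (cases "u \<le> s1")
  case True
  have Fnn: "\<And>x. F x \<ge> 0" using F_zero F_supp by (metis less_eq_real_def not_le)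
  have "(u-s1)/l1 \<le> 0" using True l by (simp add: divide_nonpos_pos)
  hence "F ((u-s1)/l1) = 0" by (rule F_zero)
  thus ?thesis using Fnn by simp
next
  case False
  hence us: "u > s1" by simp
  define H where "H x = ln (F ((x-s1)/l1)) - ln (F ((x-s2)/l2))" for x
  have dH: "(H has_real_derivative (f ((x-s1)/l1) / l1 / F ((x-s1)/l1) - f ((x-s2)/l2) / l2 / F ((x-s2)/l2))) (at x)"
    if "x > s1" for x
    unfolding H_def
    by (rule DERIV_diff; rule dln[OF F_supp f_dens]) (use that l s in auto)
  have ineq: "f ((x-s2)/l2) / l2 / F ((x-s2)/l2) \<le> f ((x-s1)/l1) / l1 / F ((x-s1)/l1)"
    if "x > s1" for x
  proof -
    define t1 where "t1 = (x-s1)/l1"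
    define t2 where "t2 = (x-s2)/l2"
    have t1p: "t1 > 0" using that l unfolding t1_def by simp
    have a: "x - s1 \<le> x - s2" using s by simp
    have "(x-s1) * l2 \<le> (x-s2) * l1" using a l that s by (intro mult_mono) auto
    hence t12: "t1 \<le> t2" unfolding t1_def t2_def using l by (simp add: field_simps)
    have t2p: "t2 > 0" using t1p t12 by simp
    have D: "t2 * rev_hazard f F t2 \<le> t1 * rev_hazard f F t1" using dp t1p t12 unfolding DPRFR_def by auto
    have hnn: "rev_hazard f F t1 \<ge> 0" unfolding rev_hazard_def using f_nonneg F_supp[OF t1p] by simp
    have Fp: "F t1 > 0" "F t2 > 0" using F_supp t1p t2p by auto
    have "f t2 / l2 / F t2 = t2 * rev_hazard f F t2 / (x - s2)"
      unfolding rev_hazard_def using l that s Fp by (simp add: t2_def field_simps)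
    also have "\<dots> \<le> t1 * rev_hazard f F t1 / (x - s2)"
      using D that s by (intro divide_right_mono) auto
    also have "\<dots> \<le> t1 * rev_hazard f F t1 / (x - s1)"
      using a that t1p hnn by (intro divide_left_mono) auto
    also have "\<dots> = f t1 / l1 / F t1"
      unfolding rev_hazard_def using l that s Fp by (simp add: t1_def field_simps)
    finally show ?thesis unfolding t1_def t2_def .
  qed
  have "H u \<le> H v"
  proof (rule DERIV_nonneg_imp_increasing_open[OF uv])
    fix x assume "u < x" "x < v"
    thus "\<exists>y. (H has_real_derivative y) (at x) \<and> 0 \<le> y"
      using dH[of x] ineq[of x] us by (intro exI[of _ "f ((x-s1)/l1) / l1 / F ((x-s1)/l1) - f ((x-s2)/l2) / l2 / F ((x-s2)/l2)"]) auto
  next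
    show "continuous_on {u..v} H"
      apply (rule continuous_at_imp_continuous_on)
      using dH us by (meson DERIV_isCont atLeastAtMost_iff less_le_trans)
  qed
  moreover have p: "F ((u-s1)/l1) > 0" "F ((v-s1)/l1) > 0" "F ((u-s2)/l2) > 0" "F ((v-s2)/l2) > 0"
    using F_supp us uv l s by auto
  ultimately have "ln (F ((u-s1)/l1) * F ((v-s2)/l2)) \<le> ln (F ((v-s1)/l1) * F ((u-s2)/l2))"
    unfolding H_def by (simp add: ln_mult)
  thus ?thesis using p by simp
qed

theorem theorem4p4:
  fixes F f :: "real \<Rightarrow> real"
    and s1 s2 l1 l2 r1 r2 :: real
    and n1 n2 n1' n2' :: nat
  assumes F_cont: "continuous_on UNIV F"
    and F_mono: "mono F"
    and F_zero: "\<And>x. x \<le> 0 \<Longrightarrow> F x = 0"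
    and F_supp: "\<And>x. x > 0 \<Longrightarrow> 0 < F x \<and> F x < 1"
    and F_lim: "(F \<longlongrightarrow> 1) at_top"
    and f_nonneg: "\<And>x. f x \<ge> 0"
    and f_dens: "\<And>x. x > 0 \<Longrightarrow> (F has_real_derivative f x) (at x)"
    and s_nonneg: "s1 \<ge> 0" "s2 \<ge> 0"
    and l_pos: "l1 > 0" "l2 > 0"
    and r_nonneg: "r1 \<ge> 0" "r2 \<ge> 0"
    and n_pos: "n1 > 0" "n2 > 0" "n1' > 0" "n2' > 0"
    and sum1: "real n1 * r1 + real n2 * r2 = 1"
    and sum2: "real n1' * r1 + real n2' * r2 = 1"
    and cases: "(DPRFR f F \<and> (l1, l2) \<in> D2plus \<and> (s1, s2) \<in> D2plus)
              \<or> (IRFR f F \<and> (l1, l2) \<in> E2plus \<and> (s1, s2) \<in> E2plus)"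
    and ncond: "n1 * n2' \<ge> n1' * n2"
  shows "rh_ge (cdf_U F n1 n2 r1 r2 s1 s2 l1 l2) (cdf_U F n1' n2' r1 r2 s1 s2 l1 l2)"
proof -
  have c1: "DPRFR f F \<and> l1 \<ge> l2 \<and> l2 > 0 \<and> s1 \<ge> s2"
    using cases irfr_impossible[OF F_cont F_supp F_lim f_nonneg f_dens] s_nonneg
    unfolding D2plus_def by auto
  define G1 where "G1 x = F ((x-s1)/l1)" for x
  define G2 where "G2 x = F ((x-s2)/l2)" for x
  have ind: "F ((x-s)/l) * Ind_gt s x = F ((x-s)/l)" if "l > 0" for x s l :: real
  proof (cases "x > s")
    case False
    hence "(x-s)/l \<le> 0" using that by (simp add: divide_nonpos_pos)
    thus ?thesis using F_zero unfolding Ind_gt_def by simp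
  qed (simp add: Ind_gt_def)
  have cdf: "cdf_U F m1 m2 r1 r2 s1 s2 l1 l2 x = real m1 * r1 * G1 x + real m2 * r2 * G2 x" for m1 m2 x
    unfolding cdf_U_def G1_def G2_def
    by (simp only: mult.assoc ind[OF l_pos(1)] ind[OF l_pos(2)])
  have nc: "real n1 * real n2' \<ge> real n1' * real n2"
    using ncond by (metis of_nat_le_iff of_nat_mult)
  show ?thesis unfolding rh_ge_def
  proof (intro allI impI)
    fix u v :: real assume uv: "u \<le> v"
    have R: "G1 u * G2 v \<le> G1 v * G2 u"
      unfolding G1_def G2_def
      by (rule ratio_mono[OF F_zero F_supp f_nonneg f_dens]) (use c1 s_nonneg uv in auto)
    have id2: "cdf_U F n1 n2 r1 r2 s1 s2 l1 l2 v * cdf_U F n1' n2' r1 r2 s1 s2 l1 l2 u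
       - cdf_U F n1 n2 r1 r2 s1 s2 l1 l2 u * cdf_U F n1' n2' r1 r2 s1 s2 l1 l2 v
       = (r1 * r2) * (real n1 * real n2' - real n1' * real n2) * (G1 v * G2 u - G1 u * G2 v)"
      unfolding cdf by (simp add: algebra_simps)
    have "0 \<le> (r1 * r2) * (real n1 * real n2' - real n1' * real n2) * (G1 v * G2 u - G1 u * G2 v)"
      using r_nonneg nc R by (intro mult_nonneg_nonneg) auto
    thus "cdf_U F n1 n2 r1 r2 s1 s2 l1 l2 u * cdf_U F n1' n2' r1 r2 s1 s2 l1 l2 v
        \<le> cdf_U F n1 n2 r1 r2 s1 s2 l1 l2 v * cdf_U F n1' n2' r1 r2 s1 s2 l1 l2 u"
      using id2 by linarith
  qed
qed

end
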